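(* Let $[n]=E_1\sqcup\cdots\sqcup E_r$ be a partition such that $\max E_i<\min E_{i+1}$ for $i=1,\dots,r-1$, and let $f:\{1,\dots,r\}\to\{2,3,\dots\}$ be a nondecreasing map. Let $\Delta$ be the simplicial complex on $[n]$ whose facets are exactly the sets $F\subseteq[n]$ such that (1) $|E_i-F|\le1$ for $i=1,\dots,r$, and (2) if $\min([n]-F)\in E_i$ then $|F|=n-f(i)$. Then $\Delta$ is shellable.
   Context: A simplicial complex is shellable if its facets can be ordered $F_1,\dots,F_q$ so that for each $k\ge2$, $(\bigcup_{i<k}2^{F_i})\cap 2^{F_k}$ is pure of dimension $\dim F_k-1$, where $2^F$ is the set of all subsets of $F$ (facets may have different dimensions). *)

theory Defs
  imports Main
begin

definition facets :: "'a set set \<Rightarrow> 'a set set" where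
  "facets K = {F \<in> K. \<forall>G\<in>K. F \<subseteq> G \<longrightarrow> G = F}"

text \<open>A complex K is pure of dimension d-1 if all its facets have exactly d elements
  (dimension of a face = cardinality minus one).\<close>
definition pure_card :: "'a set set \<Rightarrow> nat \<Rightarrow> bool" where
  "pure_card K d \<longleftrightarrow> (\<forall>F\<in>facets K. card F = d)"

text \<open>Shellability (non-pure version): an ordering F_1,...,F_q of the facets such that
  for every k \<ge> 2 the complex (\<Union>i<k. 2^{F_i}) \<inter> 2^{F_k} is pure of dimension dim F_k - 1.
  The list is 0-indexed here.\<close>
definition shellable :: "'a set set \<Rightarrow> bool" where
  "shellable \<Delta> \<longleftrightarrow>
     (\<exists>Fs. distinct Fs \<and> set Fs = facets \<Delta> \<and>
        (\<forall>k. 0 < k \<and> k < length Fs \<longrightarrow>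
           pure_card ((\<Union>i<k. Pow (Fs ! i)) \<inter> Pow (Fs ! k)) (card (Fs ! k) - 1)))"

end

theory Submission
  imports Defs
begin


definition lexR :: "nat set \<Rightarrow> nat set \<Rightarrow> bool" where
  "lexR F G \<longleftrightarrow> (\<exists>a. a \<in> G \<and> a \<notin> F \<and> (\<forall>x<a. x \<in> F \<longleftrightarrow> x \<in> G))"

lemma lexR_irrefl: "\<not> lexR F F"
  unfolding lexR_def by blast

lemma lexR_trans: assumes "lexR F G" "lexR G H" shows "lexR F H"
proof -
  obtain a where a: "a \<in> G" "a \<notin> F" "\<forall>x<a. x \<in> F \<longleftrightarrow> x \<in> G"
    using assms(1) unfolding lexR_def by blast
  obtain b where b: "b \<in> H" "b \<notin> G" "\<forall>x<b. x \<in> G \<longleftrightarrow> x \<in> H"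
    using assms(2) unfolding lexR_def by blast
  consider "a < b" | "b < a" | "a = b" by linarith
  then show ?thesis
  proof cases
    case 1
    then show ?thesis unfolding lexR_def using a b
      by (intro exI[of _ a]) auto
  next
    case 2
    then show ?thesis unfolding lexR_def using a b
      by (intro exI[of _ b]) auto
  next
    case 3
    then show ?thesis using a b by blast
  qed
qed

lemma lexR_total: assumes "F \<noteq> G" shows "lexR F G \<or> lexR G F"
proof -
  have "\<exists>x. \<not> (x \<in> F \<longleftrightarrow> x \<in> G)" using assms by blast
  then obtain a where a: "\<not> (a \<in> F \<longleftrightarrow> a \<in> G)" "\<forall>m<a. (m \<in> F \<longleftrightarrow> m \<in> G)"
    using exists_least_iff[of "\<lambda>x. \<not> (x \<in> F \<longleftrightarrow> x \<in> G)"] by blast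
  show ?thesis
  proof (cases "a \<in> G")
    case True then show ?thesis using a unfolding lexR_def by blast
  next
    case False then show ?thesis using a unfolding lexR_def by blast
  qed
qed

lemma exists_minimal:
  assumes "finite S" "S \<noteq> {}" "\<forall>x. \<not> R x x" "\<forall>x y z. R x y \<longrightarrow> R y z \<longrightarrow> R x z"
  shows "\<exists>m\<in>S. \<forall>x\<in>S. \<not> R x m"
  using assms(1,2)
proof (induction S rule: finite_ne_induct)
  case (singleton x) then show ?case using assms(3) by auto
next
  case (insert x F)
  then obtain m where m: "m \<in> F" "\<forall>y\<in>F. \<not> R y m" by blast
  show ?case
  proof (cases "R x m")
    case True
    then show ?thesis using m assms(3,4) by blast
  next
    case False
    then show ?thesis using m by blast
  qed
qed

lemma exists_sorted_list:
  assumes "finite S" "\<forall>x. \<not> R x x" "\<forall>x y z. R x y \<longrightarrow> R y z \<longrightarrow> R x z"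
    "\<forall>x\<in>S. \<forall>y\<in>S. x \<noteq> y \<longrightarrow> R x y \<or> R y x"
  shows "\<exists>xs. distinct xs \<and> set xs = S \<and> sorted_wrt R xs"
  using assms(1,4)
proof (induction "card S" arbitrary: S)
  case 0
  then show ?case by (intro exI[of _ "[]"]) auto
next
  case (Suc c)
  then have ne: "S \<noteq> {}" by auto
  obtain m where m: "m \<in> S" "\<forall>x\<in>S. \<not> R x m"
    using exists_minimal[OF Suc.prems(1) ne assms(2,3)] by blast
  have "c = card (S - {m})" using Suc.hyps(2) m(1) Suc.prems(1) by simp
  then obtain ys where ys: "distinct ys" "set ys = S - {m}" "sorted_wrt R ys"
    using Suc.hyps(1)[of "S - {m}"] Suc.prems by auto
  have "\<forall>y\<in>set ys. R m y" using ys(2) m Suc.prems(2) by auto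
  then show ?case using ys m by (intro exI[of _ "m # ys"]) auto
qed


lemma card_le1_eq: "finite A \<Longrightarrow> card A \<le> 1 \<Longrightarrow> x \<in> A \<Longrightarrow> y \<in> A \<Longrightarrow> x = y"
  using card_le_Suc0_iff_eq by (metis One_nat_def)

theorem proposition3p2:
  fixes n r :: nat and E :: "nat \<Rightarrow> nat set" and f :: "nat \<Rightarrow> nat"
    and \<Delta> :: "nat set set"
  assumes part_union: "(\<Union>i\<in>{1..r}. E i) = {1..n}"
    and part_disj: "\<forall>i\<in>{1..r}. \<forall>j\<in>{1..r}. i \<noteq> j \<longrightarrow> E i \<inter> E j = {}"
    and part_ne: "\<forall>i\<in>{1..r}. E i \<noteq> {}"
    and part_order: "\<forall>i. 1 \<le> i \<and> i < r \<longrightarrow> Max (E i) < Min (E (Suc i))"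
    and f_ge2: "\<forall>i\<in>{1..r}. f i \<ge> 2"
    and f_mono: "\<forall>i j. 1 \<le> i \<and> i \<le> j \<and> j \<le> r \<longrightarrow> f i \<le> f j"
    and cplx_sub: "\<Delta> \<subseteq> Pow {1..n}"
    and cplx_closed: "\<forall>G\<in>\<Delta>. \<forall>H. H \<subseteq> G \<longrightarrow> H \<in> \<Delta>"
    and cplx_facets: "facets \<Delta> =
       {F. F \<subseteq> {1..n} \<and> F \<noteq> {1..n} \<and>
           (\<forall>i\<in>{1..r}. card (E i - F) \<le> 1) \<and>
           (\<forall>i\<in>{1..r}. Min ({1..n} - F) \<in> E i \<longrightarrow> card F = n - f i)}"
  shows "shellable \<Delta>"
proof -
  let ?N = "{1..n}"
  have EN: "E q \<subseteq> ?N" if "q \<in> {1..r}" for q using part_union that by blast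
  have finE: "finite (E q)" if "q \<in> {1..r}" for q using EN[OF that] finite_subset by blast
  have blk: "\<exists>q\<in>{1..r}. x \<in> E q" if "x \<in> ?N" for x using part_union that by blast
  have uniq: "q = q'" if "q \<in> {1..r}" "q' \<in> {1..r}" "x \<in> E q" "x \<in> E q'" for x q q'
    using part_disj that by blast
  have ord: "x < y" if "1 \<le> i" "i < j" "j \<le> r" "x \<in> E i" "y \<in> E j" for i j x y
    using that
  proof (induction j arbitrary: y)
    case 0 then show ?case by simp
  next
    case (Suc j)
    have fj: "finite (E (Suc j))" using finE Suc.prems by auto
    have y: "Min (E (Suc j)) \<le> y" using Min_le[OF fj Suc.prems(5)] .
    show ?case
    proof (cases "i = j")
      case True
      have fi: "finite (E i)" using finE Suc.prems by auto
      have "x \<le> Max (E i)" using Max_ge[OF fi Suc.prems(4)] .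
      moreover have "Max (E i) < Min (E (Suc i))" using part_order Suc.prems True by auto
      ultimately show ?thesis using y True by simp
    next
      case False
      have jr: "j \<in> {1..r}" using Suc.prems False by auto
      then obtain y' where y': "y' \<in> E j" using part_ne by blast
      have "x < y'" using Suc.IH[OF Suc.prems(1) _ _ Suc.prems(4) y'] Suc.prems False by auto
      moreover have "y' \<le> Max (E j)" using Max_ge[OF finE[OF jr] y'] .
      moreover have "Max (E j) < Min (E (Suc j))" using part_order Suc.prems False by auto
      ultimately show ?thesis using y by simp
    qed
  qed
  have minchar: "Min (?N - G) = m" if "m \<in> ?N" "m \<notin> G" "\<forall>x\<in>?N. x < m \<longrightarrow> x \<in> G" for G m
  proof (rule Min_eqI)
    show "finite (?N - G)" by simp
    show "m \<in> ?N - G" using that by simp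
    fix y assume "y \<in> ?N - G" then show "m \<le> y" using that by (meson DiffE not_le)
  qed
  have memG: "G \<in> facets \<Delta>" if "G \<subseteq> ?N" "G \<noteq> ?N" "\<forall>q\<in>{1..r}. card (E q - G) \<le> 1"
      "\<forall>q\<in>{1..r}. Min (?N - G) \<in> E q \<longrightarrow> card G = n - f q" for G
    using that cplx_facets by blast
  have key: "\<exists>G \<in> facets \<Delta>. lexR G F \<and> F - G = {a}"
    if F: "F \<in> facets \<Delta>" and F': "F' \<in> facets \<Delta>" and aF: "a \<in> F" "a \<notin> F'"
      and agree: "\<forall>x<a. x \<in> F' \<longleftrightarrow> x \<in> F" for F F' a
  proof -
    have FN: "F \<subseteq> ?N" "F \<noteq> ?N" and Fb: "\<forall>i\<in>{1..r}. card (E i - F) \<le> 1"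
      and Fc: "\<forall>i\<in>{1..r}. Min (?N - F) \<in> E i \<longrightarrow> card F = n - f i"
      using F cplx_facets by auto
    have F'N: "F' \<subseteq> ?N" "F' \<noteq> ?N" and F'b: "\<forall>i\<in>{1..r}. card (E i - F') \<le> 1"
      and F'c: "\<forall>i\<in>{1..r}. Min (?N - F') \<in> E i \<longrightarrow> card F' = n - f i"
      using F' cplx_facets by auto
    have finF: "finite F" using FN finite_subset by blast
    have finF': "finite F'" using F'N finite_subset by blast
    have aN: "a \<in> ?N" using aF FN by blast
    obtain p where p: "p \<in> {1..r}" "a \<in> E p" using blk[OF aN] by blast
    define m where "m = Min (?N - F)"
    have ne: "?N - F \<noteq> {}" using FN by blast
    have m: "m \<in> ?N - F" "\<forall>x\<in>?N - F. m \<le> x" using Min_in[OF _ ne] Min_le m_def by auto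
    obtain i where i: "i \<in> {1..r}" "m \<in> E i" using blk m by blast
    have cardF: "card F = n - f i" using Fc i m_def by blast
    have cardF1: "card F \<ge> 1" using aF finF card_0_eq by fastforce
    have blocklemma: "\<forall>q\<in>{1..r}. card (E q - ((F - {a}) \<union> D)) \<le> 1"
      if D: "\<forall>q\<in>{1..r}. a \<in> E q \<longrightarrow> E q - F \<subseteq> D" for D
    proof
      fix q assume q: "q \<in> {1..r}"
      show "card (E q - ((F - {a}) \<union> D)) \<le> 1"
      proof (cases "a \<in> E q")
        case True
        have "E q - ((F - {a}) \<union> D) \<subseteq> {a}" using D q True by blast
        then show ?thesis by (metis card.empty card_mono is_singletonI is_singleton_altdef finite.emptyI finite.insertI)
      next
        case False
        have "E q - ((F - {a}) \<union> D) \<subseteq> E q - F" using False by blast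
        then have "card (E q - ((F - {a}) \<union> D)) \<le> card (E q - F)"
          using finE[OF q] by (meson card_mono finite_Diff)
        moreover have "card (E q - F) \<le> 1" using Fb q by blast
        ultimately show ?thesis by linarith
      qed
    qed
    have lexG: "lexR ((F - {a}) \<union> D) F \<and> F - ((F - {a}) \<union> D) = {a}"
      if "\<forall>d\<in>D. a < d" for D
    proof -
      have "a \<notin> D" using that by blast
      then show ?thesis unfolding lexR_def using aF that by (intro conjI exI[of _ a]) auto
    qed
    have "m \<noteq> a" using m aF by blast
    then consider "m < a" | "a < m" by linarith
    then show ?thesis
    proof cases
      case 1
      have mF': "m \<notin> F'" using agree 1 m by blast
      have minF': "Min (?N - F') = m"
      proof (rule minchar)
        show "m \<in> ?N" using m by blast
        show "m \<notin> F'" by fact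
        show "\<forall>x\<in>?N. x < m \<longrightarrow> x \<in> F'"
        proof (intro ballI impI)
          fix x assume x: "x \<in> ?N" "x < m"
          then have "x \<in> F" using m(2) by (meson DiffI not_le)
          then show "x \<in> F'" using agree x 1 by auto
        qed
      qed
      have cardF': "card F' = n - f i" using F'c i minF' by blast
      have finish: "\<exists>G \<in> facets \<Delta>. lexR G F \<and> F - G = {a}"
        if w: "w \<in> ?N - F" "a < w" "\<forall>q\<in>{1..r}. a \<in> E q \<longrightarrow> E q - F \<subseteq> {w}" for w
      proof -
        let ?G = "(F - {a}) \<union> {w}"
        have G1: "?G \<subseteq> ?N" using FN w by blast
        have G2: "?G \<noteq> ?N" using aN w by auto
        have G3: "\<forall>q\<in>{1..r}. card (E q - ?G) \<le> 1" using blocklemma w by blast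
        have minG: "Min (?N - ?G) = m"
        proof (rule minchar)
          show "m \<in> ?N" using m by blast
          show "m \<notin> ?G" using m 1 w by auto
          show "\<forall>x\<in>?N. x < m \<longrightarrow> x \<in> ?G"
          proof (intro ballI impI)
            fix x assume x: "x \<in> ?N" "x < m"
            then have "x \<in> F" using m(2) by (meson DiffI not_le)
            then show "x \<in> ?G" using x 1 by auto
          qed
        qed
        have "card ?G = card F" using w finF cardF1 aF
          by (simp add: card_insert_if)
        then have G4: "\<forall>q\<in>{1..r}. Min (?N - ?G) \<in> E q \<longrightarrow> card ?G = n - f q"
          using Fc minG m_def by simp
        have "?G \<in> facets \<Delta>" using memG G1 G2 G3 G4 by blast
        then show ?thesis using lexG[of "{w}"] w by blast
      qed
      show ?thesis
      proof (cases "E p - F = {}")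
        case False
        then obtain w where w: "w \<in> E p - F" by blast
        have wa: "w \<noteq> a" using w aF by blast
        have "a < w"
        proof (rule ccontr)
          assume "\<not> a < w"
          then have "w < a" using wa by simp
          then have "w \<in> E p - F'" using agree w by blast
          moreover have "a \<in> E p - F'" using p aF by blast
          ultimately have "w = a" using card_le1_eq[OF _ _ , of "E p - F'"] finE[OF p(1)] F'b p by blast
          then show False using wa by simp
        qed
        moreover have "\<forall>q\<in>{1..r}. a \<in> E q \<longrightarrow> E q - F \<subseteq> {w}"
        proof (intro ballI impI subsetI)
          fix q x assume q: "q \<in> {1..r}" "a \<in> E q" and x: "x \<in> E q - F"
          have "q = p" using uniq q p by blast
          then show "x \<in> {w}" using card_le1_eq[of "E p - F" x w] finE[OF p(1)] Fb p x w by auto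
        qed
        moreover have "w \<in> ?N - F" using w EN p by blast
        ultimately show ?thesis using finish by blast
      next
        case True
        have "\<exists>w\<in>?N - F. a < w"
        proof (rule ccontr)
          assume nw: "\<not> (\<exists>w\<in>?N - F. a < w)"
          have "?N - F \<subseteq> (?N - F') - {a}"
          proof
            fix x assume x: "x \<in> ?N - F"
            then have "x \<noteq> a" using aF by blast
            moreover have "\<not> a < x" using nw x by blast
            ultimately have "x < a" by simp
            then show "x \<in> (?N - F') - {a}" using agree x by blast
          qed
          moreover have "a \<in> ?N - F'" using aN aF by blast
          ultimately have "?N - F \<subset> ?N - F'" by blast
          then have "card (?N - F) < card (?N - F')" by (simp add: psubset_card_mono)
          moreover have "card (?N - F) = n - card F" using FN finF by (simp add: card_Diff_subset)
          moreover have "card (?N - F') = n - card F'" using F'N finF' by (simp add: card_Diff_subset)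
          ultimately show False using cardF cardF' by simp
        qed
        then obtain w where w: "w \<in> ?N - F" "a < w" by blast
        have "\<forall>q\<in>{1..r}. a \<in> E q \<longrightarrow> E q - F \<subseteq> {w}"
          using uniq p True by blast
        then show ?thesis using finish w by blast
      qed
    next
      case 2
      have below: "\<forall>x\<in>?N. x < a \<longrightarrow> x \<in> F"
      proof (intro ballI impI)
        fix x assume x: "x \<in> ?N" "x < a"
        then show "x \<in> F" using m(2) 2 by (meson DiffI not_le order.strict_trans)
      qed
      have minG: "Min (?N - ((F - {a}) \<union> D)) = a" if "\<forall>d\<in>D. a < d" for D
      proof (rule minchar)
        show "a \<in> ?N" by fact
        show "a \<notin> (F - {a}) \<union> D" using that by blast
        show "\<forall>x\<in>?N. x < a \<longrightarrow> x \<in> (F - {a}) \<union> D" using below by blast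
      qed
      show ?thesis
      proof (cases "p = i")
        case True
        let ?G = "(F - {a}) \<union> {m}"
        have G1: "?G \<subseteq> ?N" using FN m by blast
        have G2: "?G \<noteq> ?N" using aN 2 by auto
        have "\<forall>q\<in>{1..r}. a \<in> E q \<longrightarrow> E q - F \<subseteq> {m}"
        proof (intro ballI impI subsetI)
          fix q x assume q: "q \<in> {1..r}" "a \<in> E q" and x: "x \<in> E q - F"
          have "q = i" using uniq q p True by blast
          then show "x \<in> {m}" using card_le1_eq[of "E i - F" x m] finE[OF i(1)] Fb i x m by auto
        qed
        then have G3: "\<forall>q\<in>{1..r}. card (E q - ?G) \<le> 1" using blocklemma by blast
        have mG: "Min (?N - ?G) = a" using minG[of "{m}"] 2 by blast
        have "card ?G = card F" using m finF cardF1 aF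
          by (simp add: card_insert_if)
        then have G4: "\<forall>q\<in>{1..r}. Min (?N - ?G) \<in> E q \<longrightarrow> card ?G = n - f q"
        proof (intro ballI impI)
          fix q assume q: "q \<in> {1..r}" "Min (?N - ?G) \<in> E q"
          then have "q = i" using mG uniq p True by metis
          then show "card ?G = n - f q" using \<open>card ?G = card F\<close> cardF by simp
        qed
        have "?G \<in> facets \<Delta>" using memG G1 G2 G3 G4 by blast
        then show ?thesis using lexG[of "{m}"] 2 by blast
      next
        case False
        have pi: "p < i"
        proof (rule ccontr)
          assume "\<not> p < i"
          then have "i < p" using False by simp
          then have "m < a" using ord[of i p m a] i p by auto
          then show False using 2 by simp
        qed
        have fpi: "f p \<le> f i" using f_mono pi p i by auto
        have fp2: "f p \<ge> 2" using f_ge2 p by auto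
        have fin: "f i < n" using cardF cardF1 by simp
        have cardc: "card (?N - F) = f i" using FN finF cardF fin by (simp add: card_Diff_subset)
        obtain D where D: "D \<subseteq> ?N - F" "card D = f i + 1 - f p" "finite D"
        proof -
          have "f i + 1 - f p \<le> card (?N - F)" using cardc fp2 by simp
          then show ?thesis using obtain_subset_with_card_n[of "f i + 1 - f p" "?N - F"] that by blast
        qed
        have Da: "\<forall>d\<in>D. a < d"
        proof
          fix d assume "d \<in> D"
          then have "m \<le> d" using D(1) m(2) by blast
          then show "a < d" using 2 by simp
        qed
        let ?G = "(F - {a}) \<union> D"
        have G1: "?G \<subseteq> ?N" using FN D by blast
        have G2: "?G \<noteq> ?N" using aN Da by auto
        have EpF: "E p \<subseteq> F"
        proof
          fix x assume x: "x \<in> E p"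
          have "x < m" using ord[of p i x m] pi p i x by auto
          moreover have "x \<in> ?N" using x EN p(1) by blast
          ultimately show "x \<in> F" using m(2) by (meson DiffI not_le)
        qed
        have "\<forall>q\<in>{1..r}. a \<in> E q \<longrightarrow> E q - F \<subseteq> D" using uniq p EpF by blast
        then have G3: "\<forall>q\<in>{1..r}. card (E q - ?G) \<le> 1" using blocklemma by blast
        have mG: "Min (?N - ?G) = a" using minG Da by blast
        have "card ?G = card (F - {a}) + card D"
          using D finF by (intro card_Un_disjoint) auto
        also have "\<dots> = n - f p" using D cardF aF finF fin fpi fp2 by simp
        finally have cG: "card ?G = n - f p" .
        have G4: "\<forall>q\<in>{1..r}. Min (?N - ?G) \<in> E q \<longrightarrow> card ?G = n - f q"
        proof (intro ballI impI)
          fix q assume q: "q \<in> {1..r}" "Min (?N - ?G) \<in> E q"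
          then have "q = p" using mG uniq p by metis
          then show "card ?G = n - f q" using cG by simp
        qed
        have "?G \<in> facets \<Delta>" using memG G1 G2 G3 G4 by blast
        then show ?thesis using lexG Da by blast
      qed
    qed
  qed
  have finD: "finite (facets \<Delta>)"
  proof -
    have "facets \<Delta> \<subseteq> Pow ?N" using cplx_facets by auto
    then show ?thesis by (meson finite_Pow_iff finite_atLeastAtMost finite_subset)
  qed
  obtain Fs where Fs: "distinct Fs" "set Fs = facets \<Delta>" "sorted_wrt lexR Fs"
    using exists_sorted_list[OF finD, of lexR] lexR_irrefl lexR_trans lexR_total by blast
  show ?thesis unfolding shellable_def
  proof (intro exI[of _ Fs] conjI allI impI)
    show "distinct Fs" "set Fs = facets \<Delta>" by (fact Fs(1), fact Fs(2))
    fix k assume k: "0 < k \<and> k < length Fs"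
    let ?K = "(\<Union>i<k. Pow (Fs ! i)) \<inter> Pow (Fs ! k)"
    show "pure_card ?K (card (Fs ! k) - 1)" unfolding pure_card_def
    proof
      fix H assume "H \<in> facets ?K"
      then have HK: "H \<in> ?K" and Hmax: "\<forall>G\<in>?K. H \<subseteq> G \<longrightarrow> G = H" unfolding facets_def by auto
      from HK obtain j where j: "j < k" "H \<subseteq> Fs ! j" "H \<subseteq> Fs ! k" by blast
      have "lexR (Fs ! j) (Fs ! k)" using sorted_wrt_nth_less[OF Fs(3) j(1)] k by blast
      then obtain a where a: "a \<in> Fs ! k" "a \<notin> Fs ! j" "\<forall>x<a. x \<in> Fs ! j \<longleftrightarrow> x \<in> Fs ! k"
        unfolding lexR_def by blast
      have Fk: "Fs ! k \<in> facets \<Delta>" using Fs(2) k nth_mem by blast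
      have Fj: "Fs ! j \<in> facets \<Delta>" using Fs(2) k j nth_mem by (metis order.strict_trans)
      obtain G where G: "G \<in> facets \<Delta>" "lexR G (Fs ! k)" "Fs ! k - G = {a}"
        using key[OF Fk Fj a] by blast
      obtain l where l: "l < length Fs" "Fs ! l = G" using G(1) Fs(2) in_set_conv_nth by metis
      have "l < k"
      proof (rule ccontr)
        assume "\<not> l < k"
        then consider "l = k" | "k < l" by linarith
        then show False
        proof cases
          case 1 then show False using G(3) l by auto
        next
          case 2
          have "lexR (Fs ! k) (Fs ! l)" using sorted_wrt_nth_less[OF Fs(3) 2 l(1)] .
          then show False using G(2) l lexR_trans lexR_irrefl by metis
        qed
      qed
      then have "Fs ! k - {a} \<in> ?K" using G(3) l by blast
      moreover have "H \<subseteq> Fs ! k - {a}" using j a by blast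
      ultimately have "Fs ! k - {a} = H" using Hmax by blast
      moreover have "finite (Fs ! k)" using Fk cplx_facets finite_subset by fastforce
      ultimately show "card H = card (Fs ! k) - 1" using a by (metis card_Diff_singleton)
    qed
  qed
qed

end
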